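(* Let $n\ge3$, $i\in[n-2]$, and $m=n-i-1$. Let $p_{i,n}$ be the number of words $u$ of length $i$ with $i$ distinct letters from $[n]$ such that $[n]\setminus{\rm alph}(u)$ is periodic. Then $$p_{i,n}=\frac{q_{n,m}}{2}\,(r_{n,m}+i+1)\, i!,$$ where $q_{n,m}$ and $r_{n,m}$ are the quotient and remainder of the division of $n$ by $m$.
   Context: $[n]=\{1,\ldots,n\}$; ${\rm alph}(u)$ is the set of letters of $u$. A finite set $A\subset\mathbb P$ with $|A|\ge2$ is periodic if the differences between consecutive elements (in increasing order) are all equal. For integers $l$ and $m\ne0$, $l=q_{l,m}m+r_{l,m}$ with $0\le r_{l,m}<m$. *)

theory Defs
  imports Complex_Main
begin

definition periodic :: "nat set \<Rightarrow> bool" where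
  "periodic A \<longleftrightarrow> finite A \<and> 0 \<notin> A \<and> card A \<ge> 2 \<and>
     (let xs = sorted_list_of_set A in
        \<forall>j. j + 1 < length xs \<longrightarrow> xs ! (j + 1) - xs ! j = xs ! 1 - xs ! 0)"

definition p_count :: "nat \<Rightarrow> nat \<Rightarrow> nat" where
  "p_count i n = card {u :: nat list. length u = i \<and> distinct u \<and> set u \<subseteq> {1..n}
                        \<and> periodic ({1..n} - set u)}"

end

theory Submission
  imports Defs "HOL-Combinatorics.Multiset_Permutations"
begin

definition AP :: "nat \<Rightarrow> nat \<Rightarrow> nat \<Rightarrow> nat set" where
  "AP m a d = set (map (\<lambda>j. a + j*d) [0..<Suc m])"

lemma AP_sorted:
  assumes "d \<ge> 1"
  shows "sorted_list_of_set (AP m a d) = map (\<lambda>j. a + j*d) [0..<Suc m]"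
proof -
  have "sorted_wrt (<) (map (\<lambda>j. a + j*d) [0..<Suc m])"
    using assms by (auto simp: sorted_wrt_iff_nth_less simp del: upt_Suc)
  then have "sorted (map (\<lambda>j. a + j*d) [0..<Suc m])" "distinct (map (\<lambda>j. a + j*d) [0..<Suc m])"
    by (simp_all only: strict_sorted_iff)
  then show ?thesis unfolding AP_def
    by (metis sorted_list_of_set_sort_remdups distinct_remdups_id sorted_sort_id)
qed

lemma AP_props:
  assumes "m \<ge> 1" "a \<ge> 1" "d \<ge> 1" "a + m*d \<le> n"
  shows "AP m a d \<subseteq> {1..n} \<and> card (AP m a d) = m+1 \<and> periodic (AP m a d)"
proof -
  have s: "sorted_list_of_set (AP m a d) = map (\<lambda>j. a + j*d) [0..<Suc m]"
    using AP_sorted assms by blast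
  have sub: "AP m a d \<subseteq> {1..n}"
  proof
    fix x assume "x \<in> AP m a d"
    then obtain j where "j < Suc m" "x = a + j*d" unfolding AP_def by (auto simp del: upt_Suc)
    then have "j \<le> m" by simp
    then have "j*d \<le> m*d" by simp
    then have "x \<le> n" using assms \<open>x = a + j*d\<close> by linarith
    then show "x \<in> {1..n}" using assms \<open>x = a + j*d\<close> by simp
  qed
  have fin: "finite (AP m a d)" unfolding AP_def by simp
  have c: "card (AP m a d) = m+1"
  proof -
    have "length (sorted_list_of_set (AP m a d)) = m+1" using s by simp
    then show ?thesis by simp
  qed
  have "periodic (AP m a d)"
    unfolding periodic_def Let_def s using fin c assms
    by (auto simp: AP_def nth_append simp del: upt_Suc)
  then show ?thesis using sub c by blast
qed

lemma periodic_AP: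
  assumes "periodic A" "card A = m+1"
  shows "\<exists>a d. a \<ge> 1 \<and> d \<ge> 1 \<and> A = AP m a d"
proof -
  define xs where "xs = sorted_list_of_set A"
  have P: "finite A \<and> 0 \<notin> A \<and> card A \<ge> 2 \<and>
     (\<forall>j. j + 1 < length xs \<longrightarrow> xs ! (j + 1) - xs ! j = xs ! 1 - xs ! 0)"
    using assms(1) unfolding periodic_def Let_def xs_def by blast
  have fin: "finite A" and z: "0 \<notin> A" and c2: "card A \<ge> 2" using P by blast+
  have per: "\<And>j. j + 1 < length xs \<Longrightarrow> xs ! (j + 1) - xs ! j = xs ! 1 - xs ! 0"
    using P by blast
  have len: "length xs = m+1" using assms(2) fin xs_def by simp
  have st: "sorted_wrt (<) xs" unfolding xs_def by simp
  have sx: "set xs = A" unfolding xs_def using fin by simp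
  define a where "a = xs!0"
  define d where "d = xs!1 - xs!0"
  have lt: "\<And>j. j + 1 < length xs \<Longrightarrow> xs!j < xs!(j+1)"
    using st by (simp add: sorted_wrt_iff_nth_less)
  have m1: "m \<ge> 1" using c2 assms(2) by simp
  have "xs!0 < xs!(0+1)" using lt[of 0] len m1 by simp
  then have d1: "d \<ge> 1" unfolding d_def by simp
  have eq: "\<And>j. j < length xs \<Longrightarrow> xs!j = a + j*d"
  proof -
    fix j show "j < length xs \<Longrightarrow> xs!j = a + j*d"
    proof (induction j)
      case 0 then show ?case by (simp add: a_def)
    next
      case (Suc j)
      have j1: "j + 1 < length xs" using Suc.prems by simp
      have "xs!(j+1) - xs!j = d" using per[OF j1] d_def by simp
      moreover have "xs!j < xs!(j+1)" using lt[OF j1] .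
      moreover have "xs!j = a + j*d" using Suc.IH j1 by simp
      ultimately have "xs!(j+1) = a + (j+1)*d" by simp
      then show ?case by simp
    qed
  qed
  have "xs = map (\<lambda>j. a + j*d) [0..<Suc m]"
  proof (rule nth_equalityI)
    show "length xs = length (map (\<lambda>j. a + j*d) [0..<Suc m])" using len by simp
    fix k assume "k < length xs"
    then have "k < Suc m" using len by simp
    then have "map (\<lambda>j. a + j*d) [0..<Suc m] ! k = a + k*d" by (simp del: upt_Suc)
    then show "xs!k = map (\<lambda>j. a + j*d) [0..<Suc m] ! k" using eq \<open>k < length xs\<close> by simp
  qed
  then have "A = AP m a d" unfolding AP_def using sx by simp
  moreover have "a \<ge> 1"
  proof -
    have "0 < length xs" using len by simp
    then have "a \<in> set xs" unfolding a_def by (rule nth_mem)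
    then have "a \<in> A" using sx by simp
    then have "a \<noteq> 0" using z by (metis)
    then show ?thesis by simp
  qed
  ultimately show ?thesis using d1 by blast
qed

lemma AP_inj:
  assumes "m \<ge> 1" "d \<ge> 1" "d' \<ge> 1" "AP m a d = AP m a' d'"
  shows "a = a' \<and> d = d'"
proof -
  have "map (\<lambda>j. a + j*d) [0..<Suc m] = map (\<lambda>j. a' + j*d') [0..<Suc m]"
    using AP_sorted assms by metis
  then have "\<forall>k < Suc m. a + k*d = a' + k*d'" by (simp add: list_eq_iff_nth_eq del: upt_Suc)
  then have "a = a'" "a + d = a' + d'" using assms(1) by (auto dest: spec[of _ 0] spec[of _ 1])
  then show ?thesis by simp
qed

lemma W_eq:
  assumes "m + 1 \<le> n" "i = n - (m+1)"
  shows "{u :: nat list. length u = i \<and> distinct u \<and> set u \<subseteq> {1..n} \<and> periodic ({1..n} - set u)}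
     = (\<Union>A\<in>{A. A \<subseteq> {1..n} \<and> card A = m+1 \<and> periodic A}. permutations_of_set ({1..n} - A))"
    (is "?W = ?U")
proof
  show "?W \<subseteq> ?U"
  proof
    fix u assume u: "u \<in> ?W"
    define A where "A = {1..n} - set u"
    have "card (set u) = i" using u distinct_card by auto
    then have "card A = n - i" unfolding A_def using u by (simp add: card_Diff_subset)
    then have "card A = m+1" using assms by simp
    moreover have "{1..n} - A = set u" unfolding A_def using u by auto
    ultimately show "u \<in> ?U" using u unfolding permutations_of_set_def A_def by auto
  qed
next
  show "?U \<subseteq> ?W"
  proof
    fix u assume "u \<in> ?U"
    then obtain A where A: "A \<subseteq> {1..n}" "card A = m+1" "periodic A"
      and u: "set u = {1..n} - A" "distinct u" unfolding permutations_of_set_def by auto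
    have "length u = card (set u)" using u distinct_card by metis
    also have "\<dots> = n - (m+1)" using u A by (simp add: card_Diff_subset finite_subset)
    finally have "length u = i" using assms by simp
    moreover have "{1..n} - set u = A" using u A by auto
    ultimately show "u \<in> ?W" using u A by auto
  qed
qed

lemma card_W:
  assumes "m + 1 \<le> n" "i = n - (m+1)"
  shows "p_count i n = card {A. A \<subseteq> {1..n} \<and> card A = m+1 \<and> periodic A} * fact i"
proof -
  let ?P = "{A. A \<subseteq> {1..n} \<and> card A = m+1 \<and> periodic A}"
  have fin: "finite ?P" by (rule finite_subset[of _ "Pow {1..n}"]) auto
  have "p_count i n = card (\<Union>A\<in>?P. permutations_of_set ({1..n} - A))"
    unfolding p_count_def using W_eq[OF assms] by simp
  also have "\<dots> = (\<Sum>A\<in>?P. card (permutations_of_set ({1..n} - A)))"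
  proof (rule card_UN_disjoint[OF fin])
    show "\<forall>A\<in>?P. finite (permutations_of_set ({1..n} - A))" by simp
    show "\<forall>A\<in>?P. \<forall>B\<in>?P. A \<noteq> B \<longrightarrow> permutations_of_set ({1..n} - A) \<inter> permutations_of_set ({1..n} - B) = {}"
    proof (intro ballI impI)
      fix A B assume "A \<in> ?P" "B \<in> ?P" "A \<noteq> B"
      then have "{1..n} - A \<noteq> {1..n} - B" by auto
      then show "permutations_of_set ({1..n} - A) \<inter> permutations_of_set ({1..n} - B) = {}"
        unfolding permutations_of_set_def by auto
    qed
  qed
  also have "\<dots> = (\<Sum>A\<in>?P. fact i)"
  proof (rule sum.cong)
    fix A assume "A \<in> ?P"
    then have sA: "A \<subseteq> {1..n}" "card A = m+1" by auto
    then have "finite A" using finite_subset by blast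
    then have "card ({1..n} - A) = n - (m+1)" using sA card_Diff_subset[of A "{1..n}"] by simp
    then have "card ({1..n} - A) = i" using assms by simp
    then show "card (permutations_of_set ({1..n} - A)) = fact i" by simp
  qed simp
  finally show ?thesis by simp
qed

lemma card_P:
  assumes "m \<ge> 1"
  shows "card {A. A \<subseteq> {1..n} \<and> card A = m+1 \<and> periodic A} = (\<Sum>d\<in>{1..n}. n - m*d)"
proof -
  let ?P = "{A. A \<subseteq> {1..n} \<and> card A = m+1 \<and> periodic A}"
  let ?S = "SIGMA d:{1..n}. {1..n - m*d}"
  have img: "?P = (\<lambda>(d,a). AP m a d) ` ?S"
  proof
    show "?P \<subseteq> (\<lambda>(d,a). AP m a d) ` ?S"
    proof
      fix A assume A: "A \<in> ?P"
      then obtain a d where ad: "a \<ge> 1" "d \<ge> 1" "A = AP m a d" using periodic_AP by blast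
      have "a + m*d \<in> A" unfolding ad AP_def by (auto simp del: upt_Suc)
      then have "a + m*d \<le> n" using A by auto
      moreover have "d \<le> m*d" using assms by simp
      ultimately have "d \<le> n" "a \<le> n - m*d" by linarith+
      then have "(d,a) \<in> ?S" using ad by auto
      then show "A \<in> (\<lambda>(d,a). AP m a d) ` ?S" using ad by force
    qed
  next
    show "(\<lambda>(d,a). AP m a d) ` ?S \<subseteq> ?P"
    proof
      fix A assume "A \<in> (\<lambda>(d,a). AP m a d) ` ?S"
      then obtain a d where "d \<in> {1..n}" "a \<in> {1..n - m*d}" "A = AP m a d" by auto
      then have "a \<ge> 1" "d \<ge> 1" "a + m*d \<le> n" by auto
      then show "A \<in> ?P" using AP_props[OF assms] \<open>A = AP m a d\<close> by blast
    qed
  qed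
  have inj: "inj_on (\<lambda>(d,a). AP m a d) ?S"
  proof (rule inj_onI, clarify)
    fix d a d' a'
    assume "d \<in> {1..n}" "d' \<in> {1..n}" "AP m a d = AP m a' d'"
    then show "d = d' \<and> a = a'" using AP_inj[OF assms] by auto
  qed
  have "card ?P = card ?S" using img inj card_image by metis
  also have "\<dots> = (\<Sum>d\<in>{1..n}. n - m*d)" by (simp add: card_SigmaI)
  finally show ?thesis .
qed

lemma sum_trunc:
  fixes m n :: nat
  assumes "m \<ge> 1"
  shows "(\<Sum>d\<in>{1..n}. n - m*d) = (\<Sum>d\<in>{1..n div m}. n - m*d)"
proof -
  have "n div m \<le> n" by (rule div_le_dividend)
  show ?thesis
  proof (rule sum.mono_neutral_right)
    show "{1..n div m} \<subseteq> {1..n}" using \<open>n div m \<le> n\<close> by auto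
    show "\<forall>d\<in>{1..n} - {1..n div m}. n - m*d = 0"
    proof
      fix d assume "d \<in> {1..n} - {1..n div m}"
      then have "Suc (n div m) \<le> d" by auto
      then have "m * Suc (n div m) \<le> m*d" by (rule mult_le_mono2)
      moreover have "n < m * Suc (n div m)"
      proof -
        have e: "n = m*(n div m) + n mod m" by simp
        have "n mod m < m" using assms by simp
        moreover have "m * Suc (n div m) = m + m*(n div m)" by simp
        ultimately show ?thesis using e by linarith
      qed
      ultimately show "n - m*d = 0" by simp
    qed
  qed simp
qed

lemma sum_real:
  shows "(\<Sum>d\<in>{1..q}. (x::real) - y * real d) = real q * x - y * real q * (real q + 1) / 2"
proof (induction q)
  case 0 then show ?case by simp
next
  case (Suc q)
  have "(\<Sum>d\<in>{1..Suc q}. x - y * real d) = (\<Sum>d\<in>{1..q}. x - y * real d) + (x - y * real (Suc q))"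
    by simp
  also have "\<dots> = real q * x - y * real q * (real q + 1) / 2 + (x - y * (real q + 1))" using Suc by simp
  also have "\<dots> = real (Suc q) * x - y * real (Suc q) * (real (Suc q) + 1) / 2"
    by (simp add: field_simps)
  finally show ?case .
qed

lemma step1:
  fixes n i m :: nat
  assumes m1: "m \<ge> 1" and mn: "m + 1 \<le> n" and ii: "i = n - (m+1)"
  shows "p_count i n = (\<Sum>d\<in>{1..n div m}. n - m*d) * fact i"
  using card_W[OF mn ii] card_P[OF m1] sum_trunc[OF m1] by simp

lemma step2_le:
  fixes n m q d :: nat
  assumes "q = n div m" "d \<in> {1..q}"
  shows "m*d \<le> n"
proof -
  have "m*d \<le> m*q" using assms(2) by simp
  also have "\<dots> \<le> n" using assms(1) by (simp add: mult.commute)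
  finally show ?thesis .
qed

lemma step2:
  fixes n m q :: nat
  assumes "q = n div m"
  shows "real (\<Sum>d\<in>{1..q}. n - m*d) = real q * real n - real m * real q * (real q + 1) / 2"
proof -
  have "real (\<Sum>d\<in>{1..q}. n - m*d) = (\<Sum>d\<in>{1..q}. real n - real m * real d)"
    using step2_le[OF assms] by (simp add: of_nat_diff)
  also have "\<dots> = real q * real n - real m * real q * (real q + 1) / 2"
    by (rule sum_real)
  finally show ?thesis .
qed

lemma step3:
  fixes P q n m r i F :: real
  assumes "P = (q * n - m * q * (q + 1) / 2) * F" "n = q*m + r" "i + 1 = n - m"
  shows "P = q / 2 * (r + i + 1) * F"
proof -
  have h: "r + i + 1 = 2*r + q*m - m" using assms(2,3) by simp
  have "q / 2 * (r + i + 1) * F = q / 2 * (2*r + q*m - m) * F" by (simp only: h)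
  also have "\<dots> = (q * (q*m + r) - m * q * (q + 1) / 2) * F" by (simp add: field_simps)
  also have "\<dots> = P" using assms(1,2) by simp
  finally show ?thesis by simp
qed

theorem mainTheorem9:
  fixes n i m :: nat
  assumes "n \<ge> 3" and "i \<in> {1..n-2}" and "m = n - i - 1"
  shows "real (p_count i n) = real (n div m) / 2 * real (n mod m + i + 1) * fact i"
proof -
  have m1: "m \<ge> 1" and mn: "m + 1 \<le> n" and ii: "i = n - (m+1)" using assms by auto
  have e1: "real (p_count i n) = real (\<Sum>d\<in>{1..n div m}. n - m*d) * fact i"
    using step1[OF m1 mn ii] by simp
  have e2: "real (p_count i n) = (real (n div m) * real n - real m * real (n div m) * (real (n div m) + 1) / 2) * fact i"
    using e1 step2[of "n div m" n m] by simp
  have e3: "real n = real (n div m) * real m + real (n mod m)"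
    by (metis div_mult_mod_eq of_nat_add of_nat_mult)
  have e4: "real i + 1 = real n - real m" using ii mn by simp
  have "real (p_count i n) = real (n div m) / 2 * (real (n mod m) + real i + 1) * fact i"
    by (rule step3[OF e2 e3 e4])
  then show ?thesis by simp
qed

end
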